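(* Let $G^0,G^1,G^2$ be finite-dimensional complex vector spaces with $\dim G^0>\dim G^1\ge 1$. For a subspace $E\subset\mathrm{Hom}(G^0,G^1)$, define $$\phi_E:E\times\mathrm{Hom}(G^1,G^2)\to\mathrm{Hom}(G^0,G^2),\qquad(\alpha,\beta)\mapsto\beta\circ\alpha.$$ (i) If $\dim G^1=1$, then for every integer $k$ with $2\le k\le\dim\mathrm{Hom}(G^0,G^1)$ and every $E$ in a nonempty Zariski open subset of $G(k,\mathrm{Hom}(G^0,G^1))$, we have $\mathrm{Symm}(\phi_E)=\{0\}$. (ii) If $\dim G^1>1$, then for every integer $k$ with $3\le k\le\dim\mathrm{Hom}(G^0,G^1)$ and every $E$ in a nonempty Zariski open subset of $G(k,\mathrm{Hom}(G^0,G^1))$, we have $\mathrm{Symm}(\phi_E)=\{0\}$.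
   Context: For a bilinear map $B:E\times F\to G$, define $$\mathrm{Symm}(B)=\{q\in\mathrm{Hom}(E,F): B(\alpha,q(\alpha'))=B(\alpha',q(\alpha))\ \forall\alpha,\alpha'\in E\}.$$ Thus $\mathrm{Symm}(\phi_E)$ is the set of $q\in\mathrm{Hom}(E,\mathrm{Hom}(G^1,G^2))$ with $q(\alpha')\circ\alpha=q(\alpha)\circ\alpha'$ for all $\alpha,\alpha'\in E$. *)

theory Defs
  imports "Jordan_Normal_Form.Determinant"
begin

text \<open>Model: G0 = C^n0, G1 = C^n1, G2 = C^n2 (fixed bases).
  Hom(G0,G1) = complex n1 x n0 matrices, composition = matrix product.\<close>

definition lincomb :: "nat \<Rightarrow> nat \<Rightarrow> nat \<Rightarrow> (nat \<Rightarrow> complex) \<Rightarrow> (nat \<Rightarrow> complex mat) \<Rightarrow> complex mat" where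
  "lincomb n1 n0 k c b = mat n1 n0 (\<lambda>(i,j). \<Sum>r<k. c r * b r $$ (i,j))"

definition span_mats :: "nat \<Rightarrow> nat \<Rightarrow> nat \<Rightarrow> (nat \<Rightarrow> complex mat) \<Rightarrow> complex mat set" where
  "span_mats n1 n0 k b = {lincomb n1 n0 k c b | c. True}"

definition is_basis :: "nat \<Rightarrow> nat \<Rightarrow> nat \<Rightarrow> (nat \<Rightarrow> complex mat) \<Rightarrow> complex mat set \<Rightarrow> bool" where
  "is_basis n1 n0 k b E \<longleftrightarrow>
     (\<forall>r<k. b r \<in> carrier_mat n1 n0) \<and>
     (\<forall>c. lincomb n1 n0 k c b = 0\<^sub>m n1 n0 \<longrightarrow> (\<forall>r<k. c r = 0)) \<and>
     E = span_mats n1 n0 k b"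

definition grassmannian :: "nat \<Rightarrow> nat \<Rightarrow> nat \<Rightarrow> complex mat set set" where
  "grassmannian k n1 n0 = {E. \<exists>b. is_basis n1 n0 k b E}"

text \<open>Plucker coordinates of (the span of) a basis b: the k x k minors of the
  k x (n1*n0) matrix whose rows are the flattened b r; indexed by k-subsets S of
  {0..<n1*n0} (value 0 at other indices).\<close>
definition plucker :: "nat \<Rightarrow> nat \<Rightarrow> nat \<Rightarrow> (nat \<Rightarrow> complex mat) \<Rightarrow> nat set \<Rightarrow> complex" where
  "plucker k n1 n0 b S =
     (if S \<subseteq> {..<n1*n0} \<and> card S = k then
        det (mat k k (\<lambda>(r,c). let p = sorted_list_of_set S ! c in b r $$ (p div n0, p mod n0)))
      else 0)"

inductive polyfun :: "(('v \<Rightarrow> complex) \<Rightarrow> complex) \<Rightarrow> bool" where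
  pconst: "polyfun (\<lambda>x. c)"
| pvar: "polyfun (\<lambda>x. x v)"
| padd: "polyfun f \<Longrightarrow> polyfun g \<Longrightarrow> polyfun (\<lambda>x. f x + g x)"
| pmult: "polyfun f \<Longrightarrow> polyfun g \<Longrightarrow> polyfun (\<lambda>x. f x * g x)"

definition homogeneous_poly :: "(('v \<Rightarrow> complex) \<Rightarrow> complex) \<Rightarrow> bool" where
  "homogeneous_poly f \<longleftrightarrow> polyfun f \<and> (\<exists>d::nat. \<forall>t x. f (\<lambda>v. t * x v) = t ^ d * f x)"

text \<open>Zariski open subsets of G(k, Hom(G0,G1)) via the Plucker embedding:
  complements of common zero loci of sets of homogeneous polynomials
  in the Plucker coordinates.\<close>
definition zariski_open_grass :: "nat \<Rightarrow> nat \<Rightarrow> nat \<Rightarrow> complex mat set set \<Rightarrow> bool" where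
  "zariski_open_grass k n1 n0 U \<longleftrightarrow>
     (\<exists>P :: ((nat set \<Rightarrow> complex) \<Rightarrow> complex) set.
        (\<forall>f\<in>P. homogeneous_poly f) \<and>
        U = {E \<in> grassmannian k n1 n0.
               \<exists>b f. is_basis n1 n0 k b E \<and> f \<in> P \<and> f (plucker k n1 n0 b) \<noteq> 0})"

text \<open>q \<in> Hom(E, Hom(G1,G2)): a linear map on the subspace E (values off E irrelevant).\<close>
definition hom_on :: "complex mat set \<Rightarrow> nat \<Rightarrow> nat \<Rightarrow> (complex mat \<Rightarrow> complex mat) \<Rightarrow> bool" where
  "hom_on E n2 n1 q \<longleftrightarrow>
     (\<forall>a\<in>E. q a \<in> carrier_mat n2 n1) \<and>
     (\<forall>a\<in>E. \<forall>a'\<in>E. q (a + a') = q a + q a') \<and>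
     (\<forall>t. \<forall>a\<in>E. q (t \<cdot>\<^sub>m a) = t \<cdot>\<^sub>m q a)"

text \<open>Symm(phi_E) = {0}: every q in Hom(E,Hom(G1,G2)) with
  q(a') o a = q(a) o a' for all a, a' in E is the zero map on E.\<close>
definition symm_trivial :: "complex mat set \<Rightarrow> nat \<Rightarrow> nat \<Rightarrow> bool" where
  "symm_trivial E n2 n1 \<longleftrightarrow>
     (\<forall>q. hom_on E n2 n1 q \<and> (\<forall>a\<in>E. \<forall>a'\<in>E. q a' * a = q a * a')
          \<longrightarrow> (\<forall>a\<in>E. q a = 0\<^sub>m n2 n1))"

end

theory Submission
  imports Defs
begin


lemma polyfun_sum: "finite A \<Longrightarrow> (\<And>a. a \<in> A \<Longrightarrow> polyfun (g a)) \<Longrightarrow> polyfun (\<lambda>x. \<Sum>a\<in>A. g a x)"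
proof (induction A rule: finite_induct)
  case empty then show ?case using pconst[of 0] by simp
next
  case (insert a A)
  then show ?case by (simp add: padd)
qed

lemma polyfun_prod: "finite A \<Longrightarrow> (\<And>a. a \<in> A \<Longrightarrow> polyfun (g a)) \<Longrightarrow> polyfun (\<lambda>x. \<Prod>a\<in>A. g a x)"
proof (induction A rule: finite_induct)
  case empty then show ?case using pconst[of 1] by simp
next
  case (insert a A)
  then show ?case by (simp add: pmult)
qed

lemma polyfun_minus: "polyfun f \<Longrightarrow> polyfun g \<Longrightarrow> polyfun (\<lambda>x. f x - g x)"
proof -
  assume "polyfun f" "polyfun g"
  then have "polyfun (\<lambda>x. f x + (\<lambda>x. -1) x * g x)" by (intro padd pmult pconst)
  then show ?thesis by simp
qed

lemma polyfun_det:
  assumes "\<And>i j. i < m \<Longrightarrow> j < m \<Longrightarrow> polyfun (h i j)"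
  shows "polyfun (\<lambda>x. det (mat m m (\<lambda>(i,j). h i j x)))"
proof -
  have eq: "(\<lambda>x. det (mat m m (\<lambda>(i,j). h i j x))) =
     (\<lambda>x. \<Sum>p\<in>{p. p permutes {0..<m}}. signof p * (\<Prod>i\<in>{0..<m}. h i (p i) x))"
    by (rule ext, subst det_def'[of _ m], auto intro!: sum.cong prod.cong)
  have fin: "finite {p. p permutes {0..<m}}" by (simp add: finite_permutations)
  show ?thesis unfolding eq
  proof (rule polyfun_sum[OF fin])
    fix p assume p: "p \<in> {p. p permutes {0..<m}}"
    have "polyfun (\<lambda>x. \<Prod>i\<in>{0..<m}. h i (p i) x)"
    proof (rule polyfun_prod, simp)
      fix i assume "i \<in> {0..<m}"
      moreover then have "p i < m" using p permutes_in_image by fastforce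
      ultimately show "polyfun (h i (p i))" using assms by auto
    qed
    then show "polyfun (\<lambda>x. signof p * (\<Prod>i\<in>{0..<m}. h i (p i) x))"
      by (intro pmult pconst)
  qed
qed

definition fl :: "nat \<Rightarrow> (nat \<Rightarrow> complex mat) \<Rightarrow> nat \<Rightarrow> nat \<Rightarrow> complex" where
  "fl n0 b s t = b s $$ (t div n0, t mod n0)"

definition idx :: "nat list \<Rightarrow> nat \<Rightarrow> nat" where
  "idx xs x = (THE i. i < length xs \<and> xs ! i = x)"

lemma idx: "distinct xs \<Longrightarrow> x \<in> set xs \<Longrightarrow> idx xs x < length xs \<and> xs ! idx xs x = x"
  unfolding idx_def by (rule theI') (rule distinct_Ex1)

lemma idx_eq: "distinct xs \<Longrightarrow> i < length xs \<Longrightarrow> idx xs (xs ! i) = i"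
  unfolding idx_def by (rule the_equality) (auto simp: nth_eq_iff_index_eq)

definition permL :: "nat list \<Rightarrow> nat \<Rightarrow> nat" where
  "permL L = (\<lambda>c. if c < length L then idx (sorted_list_of_set (set L)) (L ! c) else c)"

definition coefN :: "nat set \<Rightarrow> nat \<Rightarrow> nat \<Rightarrow> (nat set \<Rightarrow> complex) \<Rightarrow> complex" where
  "coefN S0 r t x = (let L = (sorted_list_of_set S0)[r := t] in
     if distinct L then of_int (sign (permL L)) * x (set L) else 0)"

definition Mf :: "nat \<Rightarrow> (nat \<Rightarrow> nat \<Rightarrow> complex) \<Rightarrow> nat \<times> nat \<times> nat \<Rightarrow> nat \<Rightarrow> nat \<Rightarrow> complex" where
  "Mf n0 N e r' l = (case e of (r,s,j) \<Rightarrow>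
     (if r' = s then N r (l*n0+j) else 0) - (if r' = r then N s (l*n0+j) else 0))"

definition Eset :: "nat \<Rightarrow> nat \<Rightarrow> (nat \<times> nat \<times> nat) set" where
  "Eset k n0 = {..<k} \<times> {..<k} \<times> {..<n0}"

definition Gram :: "nat \<Rightarrow> nat \<Rightarrow> nat \<Rightarrow> (nat \<Rightarrow> nat \<Rightarrow> complex) \<Rightarrow> complex mat" where
  "Gram n0 n1 k N = mat (k*n1) (k*n1) (\<lambda>(u,u'). \<Sum>e\<in>Eset k n0.
      Mf n0 N e (u div n1) (u mod n1) * Mf n0 N e (u' div n1) (u' mod n1))"

definition fpoly :: "nat \<Rightarrow> nat \<Rightarrow> nat \<Rightarrow> nat set \<Rightarrow> (nat set \<Rightarrow> complex) \<Rightarrow> complex" where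
  "fpoly n0 n1 k S0 x = x S0 * det (Gram n0 n1 k (\<lambda>r t. coefN S0 r t x))"

lemma polyfun_coefN: "polyfun (coefN S0 r t)"
proof -
  let ?L = "(sorted_list_of_set S0)[r := t]"
  show ?thesis
  proof (cases "distinct ?L")
    case True
    then have "coefN S0 r t = (\<lambda>x. (\<lambda>x. of_int (sign (permL ?L))) x * x (set ?L))"
      by (auto simp: coefN_def Let_def)
    then show ?thesis by (simp add: pmult pconst pvar)
  next
    case False
    then have "coefN S0 r t = (\<lambda>x. 0)" by (auto simp: coefN_def Let_def)
    then show ?thesis by (simp add: pconst)
  qed
qed

lemma polyfun_Mf: "polyfun (\<lambda>x. Mf n0 (\<lambda>r t. coefN S0 r t x) e r' l)"
proof -
  obtain r s j where e: "e = (r,s,j)" by (cases e) auto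
  have 1: "polyfun (\<lambda>x. if r' = s then coefN S0 r (l*n0+j) x else 0)"
    by (cases "r' = s") (auto simp: polyfun_coefN pconst)
  have 2: "polyfun (\<lambda>x. if r' = r then coefN S0 s (l*n0+j) x else 0)"
    by (cases "r' = r") (auto simp: polyfun_coefN pconst)
  show ?thesis unfolding e Mf_def using polyfun_minus[OF 1 2] by simp
qed

lemma finite_Eset: "finite (Eset k n0)" by (simp add: Eset_def)

lemma polyfun_fpoly: "polyfun (fpoly n0 n1 k S0)"
proof -
  have "polyfun (\<lambda>x. det (mat (k*n1) (k*n1) (\<lambda>(u,u'). (\<lambda>u u' x. \<Sum>e\<in>Eset k n0.
      Mf n0 (\<lambda>r t. coefN S0 r t x) e (u div n1) (u mod n1) * Mf n0 (\<lambda>r t. coefN S0 r t x) e (u' div n1) (u' mod n1)) u u' x)))"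
    by (rule polyfun_det, rule polyfun_sum[OF finite_Eset], rule pmult, rule polyfun_Mf, rule polyfun_Mf)
  then have "polyfun (\<lambda>x. det (Gram n0 n1 k (\<lambda>r t. coefN S0 r t x)))" unfolding Gram_def by simp
  then have "polyfun (\<lambda>x. x S0 * det (Gram n0 n1 k (\<lambda>r t. coefN S0 r t x)))" by (intro pmult pvar)
  then show ?thesis unfolding fpoly_def[abs_def] by simp
qed

lemma coefN_scale: "coefN S0 r t (\<lambda>v. c * x v) = c * coefN S0 r t x"
  by (simp add: coefN_def Let_def)

lemma Mf_scale: "Mf n0 (\<lambda>r t. c * N r t) e r' l = c * Mf n0 N e r' l"
  by (cases e) (auto simp: Mf_def algebra_simps)

lemma Gram_scale: "Gram n0 n1 k (\<lambda>r t. c * N r t) = (c^2) \<cdot>\<^sub>m Gram n0 n1 k N"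
  by (rule eq_matI) (auto simp: Gram_def Mf_scale sum_distrib_left power2_eq_square intro!: sum.cong)

lemma homogeneous_fpoly: "homogeneous_poly (fpoly n0 n1 k S0)"
  unfolding homogeneous_poly_def
proof (intro conjI polyfun_fpoly exI allI)
  fix t :: complex and x :: "nat set \<Rightarrow> complex"
  have "fpoly n0 n1 k S0 (\<lambda>v. t * x v) = t * x S0 * det ((t^2) \<cdot>\<^sub>m Gram n0 n1 k (\<lambda>r ta. coefN S0 r ta x))"
    unfolding fpoly_def coefN_scale Gram_scale by simp
  also have "\<dots> = t ^ (1 + 2 * (k*n1)) * fpoly n0 n1 k S0 x"
    by (simp add: fpoly_def Gram_def power_mult power_add)
  finally show "fpoly n0 n1 k S0 (\<lambda>v. t * x v) = t ^ (1 + 2 * (k*n1)) * fpoly n0 n1 k S0 x" .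
qed



lemma det_perm_cols:
  fixes g :: "nat \<Rightarrow> nat \<Rightarrow> complex"
  assumes d: "distinct L" and len: "length L = k"
  shows "det (mat k k (\<lambda>(s,c). g s (L!c))) =
         signof (permL L) * det (mat k k (\<lambda>(s,c). g s (sorted_list_of_set (set L) ! c)))"
proof -
  let ?SL = "sorted_list_of_set (set L)"
  let ?p = "permL L"
  have lenSL: "length ?SL = k" using d len by (simp add: distinct_card)
  have setSL: "set ?SL = set L" by simp
  have dSL: "distinct ?SL" by simp
  have pc: "?p c < k \<and> ?SL ! (?p c) = L ! c" if "c < k" for c
    using idx[OF dSL, of "L!c"] that len lenSL by (auto simp: permL_def)
  have inj: "inj_on ?p {0..<k}"
  proof (rule inj_onI)
    fix c1 c2 assume c: "c1 \<in> {0..<k}" "c2 \<in> {0..<k}" "?p c1 = ?p c2"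
    then have "L ! c1 = L ! c2" using pc[of c1] pc[of c2] by auto
    then show "c1 = c2" using c d len by (simp add: nth_eq_iff_index_eq)
  qed
  have img: "?p ` {0..<k} = {0..<k}"
    by (rule endo_inj_surj) (use pc inj in auto)
  have perm: "?p permutes {0..<k}"
    by (rule bij_imp_permutes) (use inj img len in \<open>auto simp: bij_betw_def permL_def\<close>)
  define M where "M = mat k k (\<lambda>(s,c). g s (?SL ! c))"
  have M: "M \<in> carrier_mat k k" by (simp add: M_def)
  have "mat k k (\<lambda>(s,c). g s (L!c)) = transpose_mat (mat k k (\<lambda>(i,j). (transpose_mat M) $$ (?p i, j)))"
    by (rule eq_matI) (auto simp: M_def pc)
  then have "det (mat k k (\<lambda>(s,c). g s (L!c))) = det (mat k k (\<lambda>(i,j). (transpose_mat M) $$ (?p i, j)))"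
    by (metis carrier_matI det_transpose dim_col_mat(1) dim_row_mat(1))
  also have "\<dots> = signof ?p * det (transpose_mat M)"
    by (rule det_permute_rows[OF _ perm]) (use M in auto)
  also have "\<dots> = signof ?p * det M" using det_transpose[OF M] by simp
  finally show ?thesis unfolding M_def .
qed

lemma det_dup_cols:
  fixes g :: "nat \<Rightarrow> nat \<Rightarrow> complex"
  assumes d: "\<not> distinct L" and len: "length L = k"
  shows "det (mat k k (\<lambda>(s,c). g s (L!c))) = 0"
proof -
  obtain i j where ij: "i < k" "j < k" "i \<noteq> j" "L ! i = L ! j"
    using d len by (metis distinct_conv_nth)
  show ?thesis
    by (rule det_identical_columns[of _ k i j]) (use ij in auto)
qed

lemma adj_replace:
  assumes A: "A \<in> carrier_mat n n" and b: "b \<in> carrier_vec n" and k: "k < n"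
  shows "(adj_mat A *\<^sub>v b) $ k = det (replace_col A b k)"
proof -
  let ?Ab = "replace_col A b k" 
  have Ab: "?Ab \<in> carrier_mat n n" using A by (auto simp: replace_col_def)
  have "(adj_mat A *\<^sub>v b) $ k = row (adj_mat A) k \<bullet> b" using adj_mat[OF A] b k by auto
  also have "\<dots> = det (replace_col A b k)" unfolding scalar_prod_def using b k A
    by (subst laplace_expansion_column[OF Ab k], auto intro!: sum.cong arg_cong[of _ _ det] 
      arg_cong[of _ _ "\<lambda> x. _ * x"] eq_matI
      simp: replace_col_def adj_mat_def Matrix.row_def cofactor_def mat_delete_def ac_simps)
  finally show ?thesis .
qed

definition Amat :: "nat \<Rightarrow> nat \<Rightarrow> nat set \<Rightarrow> (nat \<Rightarrow> complex mat) \<Rightarrow> complex mat" where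
  "Amat n0 k S0 b = mat k k (\<lambda>(s,c). fl n0 b s (sorted_list_of_set S0 ! c))"

lemma plucker_fl: "S \<subseteq> {..<n1*n0} \<Longrightarrow> card S = k \<Longrightarrow>
  plucker k n1 n0 b S = det (mat k k (\<lambda>(s,c). fl n0 b s (sorted_list_of_set S ! c)))"
  by (simp add: plucker_def fl_def Let_def)

lemma plucker_S0: "S0 \<subseteq> {..<n1*n0} \<Longrightarrow> card S0 = k \<Longrightarrow> plucker k n1 n0 b S0 = det (Amat n0 k S0 b)"
  by (simp add: plucker_fl Amat_def)

lemma cramer_coef:
  assumes S0: "S0 \<subseteq> {..<n1*n0}" "card S0 = k" and r: "r < k" and t: "t < n1*n0"
  shows "coefN S0 r t (plucker k n1 n0 b) = (\<Sum>s<k. adj_mat (Amat n0 k S0 b) $$ (r,s) * fl n0 b s t)"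
proof -
  let ?SL = "sorted_list_of_set S0"
  let ?L = "?SL[r := t]"
  let ?A = "Amat n0 k S0 b"
  let ?v = "vec k (\<lambda>s. fl n0 b s t)"
  have fin: "finite S0" using S0 by (meson finite_lessThan finite_subset)
  have lenSL: "length ?SL = k" using S0 fin by simp
  have lenL: "length ?L = k" using lenSL by simp
  have A: "?A \<in> carrier_mat k k" by (simp add: Amat_def)
  have "(\<Sum>s<k. adj_mat ?A $$ (r,s) * fl n0 b s t) = (adj_mat ?A *\<^sub>v ?v) $ r"
    using adj_mat(1)[OF A] r by (auto simp: scalar_prod_def Matrix.row_def intro!: sum.cong)
  also have "\<dots> = det (replace_col ?A ?v r)" by (rule adj_replace[OF A _ r]) simp
  also have "replace_col ?A ?v r = mat k k (\<lambda>(s,c). fl n0 b s (?L!c))"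
    by (rule eq_matI) (use lenSL in \<open>auto simp: replace_col_def Amat_def nth_list_update\<close>)
  finally have eq: "(\<Sum>s<k. adj_mat ?A $$ (r,s) * fl n0 b s t) = det (mat k k (\<lambda>(s,c). fl n0 b s (?L!c)))" .
  show ?thesis
  proof (cases "distinct ?L")
    case True
    have sub: "set ?L \<subseteq> {..<n1*n0}"
      using set_update_subset_insert[of ?SL r t] S0 fin t by auto
    have card: "card (set ?L) = k" using True lenL by (simp add: distinct_card)
    show ?thesis unfolding eq det_perm_cols[OF True lenL]
      by (simp add: coefN_def Let_def True plucker_fl[OF sub card])
  next
    case False
    show ?thesis unfolding eq det_dup_cols[OF False lenL]
      by (simp add: coefN_def Let_def False)
  qed
qed



definition bst :: "nat \<Rightarrow> nat \<Rightarrow> nat \<Rightarrow> (nat \<Rightarrow> nat \<Rightarrow> complex) \<Rightarrow> bool" where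
  "bst n1 n0 k N \<longleftrightarrow> (\<forall>y. (\<forall>r<k. \<forall>s<k. \<forall>j<n0.
      (\<Sum>l<n1. y s l * N r (l*n0+j)) = (\<Sum>l<n1. y r l * N s (l*n0+j))) \<longrightarrow> (\<forall>r<k. \<forall>l<n1. y r l = 0))"

lemma sum_divmod: "(\<Sum>u<(k::nat)*n. g (u div n) (u mod n)) = (\<Sum>r<k. \<Sum>l<n. g r l)"
proof (induction k)
  case 0 then show ?case by simp
next
  case (Suc k)
  let ?G = "\<lambda>u. g (u div n) (u mod n)"
  have "(\<Sum>u<Suc k*n. ?G u) = (\<Sum>u\<in>{0..<k*n+n}. ?G u)"
    by (simp add: lessThan_atLeast0 add.commute)
  also have "\<dots> = (\<Sum>u\<in>{0..<k*n}. ?G u) + (\<Sum>u\<in>{k*n..<k*n+n}. ?G u)"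
    by (rule sum.atLeastLessThan_concat[symmetric]) auto
  also have "(\<Sum>u\<in>{k*n..<k*n+n}. ?G u) = (\<Sum>l\<in>{0..<n}. ?G (l + k*n))"
    using sum.shift_bounds_nat_ivl[of ?G 0 "k*n" n] by (simp add: add.commute)
  also have "\<dots> = (\<Sum>l<n. g k l)" by (rule sum.cong) (auto simp: lessThan_atLeast0)
  finally show ?case using Suc by (simp add: lessThan_atLeast0)
qed

lemma idx_lt: "a < k \<Longrightarrow> b < n \<Longrightarrow> a*n+b < k*(n::nat)"
proof -
  assume "a < k" "b < n"
  then have "a*n+b < (a+1)*n" "(a+1)*n \<le> k*n" using mult_le_mono1[of "a+1" k n] by simp_all
  then show ?thesis by linarith
qed

lemma Mf_sum:
  assumes r: "r < k" and s: "s < k"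
  shows "(\<Sum>r'<k. \<Sum>l<n1. Mf n0 N (r,s,j) r' l * w r' l) =
         (\<Sum>l<n1. w s l * N r (l*n0+j)) - (\<Sum>l<n1. w r l * N s (l*n0+j))"
proof -
  have "(\<Sum>r'<k. \<Sum>l<n1. Mf n0 N (r,s,j) r' l * w r' l) =
     (\<Sum>r'<k. (if r' = s then (\<Sum>l<n1. w s l * N r (l*n0+j)) else 0)) -
     (\<Sum>r'<k. (if r' = r then (\<Sum>l<n1. w r l * N s (l*n0+j)) else 0))"
    unfolding sum_subtractf[symmetric]
    by (rule sum.cong) (auto simp: Mf_def left_diff_distrib sum_subtractf mult.commute sum_negf)
  also have "\<dots> = (\<Sum>l<n1. w s l * N r (l*n0+j)) - (\<Sum>l<n1. w r l * N s (l*n0+j))"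
    using r s by (simp add: sum.If_cases)
  finally show ?thesis .
qed

lemma Gram_mult:
  assumes v: "v \<in> carrier_vec (k*n1)" and u: "u < k*n1"
  shows "(Gram n0 n1 k N *\<^sub>v v) $ u = (\<Sum>e\<in>Eset k n0. Mf n0 N e (u div n1) (u mod n1) *
           (\<Sum>u'<k*n1. Mf n0 N e (u' div n1) (u' mod n1) * v $ u'))"
proof -
  have "(Gram n0 n1 k N *\<^sub>v v) $ u = (\<Sum>u'<k*n1. (\<Sum>e\<in>Eset k n0.
      Mf n0 N e (u div n1) (u mod n1) * Mf n0 N e (u' div n1) (u' mod n1)) * v $ u')"
    using v u by (auto simp: Gram_def scalar_prod_def lessThan_atLeast0 intro!: sum.cong)
  also have "\<dots> = (\<Sum>e\<in>Eset k n0. Mf n0 N e (u div n1) (u mod n1) *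
           (\<Sum>u'<k*n1. Mf n0 N e (u' div n1) (u' mod n1) * v $ u'))"
    by (simp add: sum_distrib_left sum_distrib_right mult.assoc sum.swap[of _ "Eset k n0"])
  finally show ?thesis .
qed

lemma Eset_mem: "e \<in> Eset k n0 \<Longrightarrow> \<exists>r s j. e = (r,s,j) \<and> r < k \<and> s < k \<and> j < n0"
  by (auto simp: Eset_def)

lemma zsum_eq:
  assumes "e \<in> Eset k n0"
  shows "(\<Sum>u'<k*n1. Mf n0 N e (u' div n1) (u' mod n1) * v $ u') =
    (case e of (r,s,j) \<Rightarrow> (\<Sum>l<n1. v $ (s*n1+l) * N r (l*n0+j)) - (\<Sum>l<n1. v $ (r*n1+l) * N s (l*n0+j)))"
proof -
  obtain r s j where e: "e = (r,s,j)" "r < k" "s < k" "j < n0" using Eset_mem[OF assms] by blast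
  have "(\<Sum>u'<k*n1. Mf n0 N e (u' div n1) (u' mod n1) * v $ u') =
        (\<Sum>u'<k*n1. (\<lambda>a b. Mf n0 N e a b * v $ (a*n1+b)) (u' div n1) (u' mod n1))"
    by (simp add: mult.commute[of "_ div _"])
  also have "\<dots> = (\<Sum>r'<k. \<Sum>l<n1. Mf n0 N e r' l * v $ (r'*n1+l))"
    by (rule sum_divmod)
  also have "\<dots> = (\<Sum>l<n1. v $ (s*n1+l) * N r (l*n0+j)) - (\<Sum>l<n1. v $ (r*n1+l) * N s (l*n0+j))"
    unfolding e(1) by (rule Mf_sum[OF e(2,3)])
  finally show ?thesis using e by simp
qed

lemma gram_bst:
  assumes "det (Gram n0 n1 k N) \<noteq> 0"
  shows "bst n1 n0 k N"
  unfolding bst_def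
proof (intro allI impI)
  fix y r l
  assume c: "\<forall>r<k. \<forall>s<k. \<forall>j<n0. (\<Sum>l<n1. y s l * N r (l*n0+j)) = (\<Sum>l<n1. y r l * N s (l*n0+j))"
  assume rl: "r < k" "l < n1"
  define v where "v = vec (k*n1) (\<lambda>u. y (u div n1) (u mod n1))"
  have v: "v \<in> carrier_vec (k*n1)" by (simp add: v_def)
  have vi: "v $ (a*n1+b) = y a b" if "a < k" "b < n1" for a b
  proof -
    have "a*n1+b < k*n1" using that by (rule idx_lt)
    then show ?thesis using that by (simp add: v_def)
  qed
  have z: "(\<Sum>u'<k*n1. Mf n0 N e (u' div n1) (u' mod n1) * v $ u') = 0" if eE: "e \<in> Eset k n0" for e
  proof -
    obtain r s j where e: "e = (r,s,j)" "r < k" "s < k" "j < n0" using Eset_mem[OF eE] by blast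
    show ?thesis unfolding zsum_eq[OF eE] using e c vi by simp
  qed
  have G: "Gram n0 n1 k N \<in> carrier_mat (k*n1) (k*n1)" by (simp add: Gram_def)
  have "Gram n0 n1 k N *\<^sub>v v = 0\<^sub>v (k*n1)"
  proof (rule eq_vecI)
    fix i assume "i < dim_vec (0\<^sub>v (k*n1))"
    then have "i < k*n1" by simp
    then show "(Gram n0 n1 k N *\<^sub>v v) $ i = 0\<^sub>v (k*n1) $ i"
      by (simp add: Gram_mult[OF v] z)
  qed (use G in simp)
  then have "v = 0\<^sub>v (k*n1)" using det_0_iff_vec_prod_zero[OF G] assms v by blast
  then have "v $ (r*n1+l) = 0" using rl idx_lt[OF rl] by simp
  then show "y r l = 0" using vi rl by simp
qed



lemma Mf_real: "(\<And>r t. cnj (N r t) = N r t) \<Longrightarrow> cnj (Mf n0 N e r' l) = Mf n0 N e r' l"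
  by (cases e) (auto simp: Mf_def)

lemma bst_gram:
  assumes real: "\<And>r t. cnj (N r t) = N r t" and B: "bst n1 n0 k N"
  shows "det (Gram n0 n1 k N) \<noteq> 0"
proof
  assume d0: "det (Gram n0 n1 k N) = 0"
  have G: "Gram n0 n1 k N \<in> carrier_mat (k*n1) (k*n1)" by (simp add: Gram_def)
  obtain v where v: "v \<in> carrier_vec (k*n1)" "v \<noteq> 0\<^sub>v (k*n1)" "Gram n0 n1 k N *\<^sub>v v = 0\<^sub>v (k*n1)"
    using det_0_iff_vec_prod_zero[OF G] d0 by blast
  define z where "z e = (\<Sum>u'<k*n1. Mf n0 N e (u' div n1) (u' mod n1) * v $ u')" for e
  have cz: "cnj (z e) = (\<Sum>u<k*n1. Mf n0 N e (u div n1) (u mod n1) * cnj (v $ u))" for e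
    by (simp add: z_def Mf_real[OF real])
  have "0 = (\<Sum>u<k*n1. cnj (v $ u) * (Gram n0 n1 k N *\<^sub>v v) $ u)"
    using v(3) by simp
  also have "\<dots> = (\<Sum>u<k*n1. cnj (v $ u) * (\<Sum>e\<in>Eset k n0. Mf n0 N e (u div n1) (u mod n1) * z e))"
    by (rule sum.cong) (auto simp: Gram_mult[OF v(1)] z_def)
  also have "\<dots> = (\<Sum>e\<in>Eset k n0. z e * cnj (z e))"
    unfolding cz by (simp add: sum_distrib_left sum_distrib_right sum.swap[of _ "Eset k n0"] mult_ac)
  also have "\<dots> = (\<Sum>e\<in>Eset k n0. complex_of_real ((cmod (z e))^2))"
    by (simp add: complex_norm_square[symmetric])
  also have "\<dots> = complex_of_real (\<Sum>e\<in>Eset k n0. (cmod (z e))^2)" by simp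
  finally have "complex_of_real (\<Sum>e\<in>Eset k n0. (cmod (z e))^2) = 0" by (rule sym)
  then have "(\<Sum>e\<in>Eset k n0. (cmod (z e))^2) = 0" by (simp only: of_real_eq_0_iff)
  then have z0: "z e = 0" if "e \<in> Eset k n0" for e
    using sum_nonneg_eq_0_iff[OF finite_Eset, where f="\<lambda>e. (cmod (z e))^2"] that by simp
  define y where "y r l = v $ (r*n1+l)" for r l
  have "\<forall>r<k. \<forall>s<k. \<forall>j<n0. (\<Sum>l<n1. y s l * N r (l*n0+j)) = (\<Sum>l<n1. y r l * N s (l*n0+j))"
  proof (intro allI impI)
    fix r s j assume "r < k" "s < k" "j < n0"
    then have "(r,s,j) \<in> Eset k n0" by (simp add: Eset_def)
    from z0[OF this] zsum_eq[OF this, of N n1 v] show "(\<Sum>l<n1. y s l * N r (l*n0+j)) = (\<Sum>l<n1. y r l * N s (l*n0+j))"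
      by (simp add: z_def y_def)
  qed
  with B have y0: "\<forall>r<k. \<forall>l<n1. y r l = 0" unfolding bst_def by blast
  have "v = 0\<^sub>v (k*n1)"
  proof (rule eq_vecI)
    fix u assume "u < dim_vec (0\<^sub>v (k*n1))"
    then have u: "u < k*n1" by simp
    then have n1: "n1 > 0" by (cases n1) auto
    have "u div n1 < k" using u by (simp add: less_mult_imp_div_less)
    moreover have "u mod n1 < n1" using n1 by simp
    ultimately have "y (u div n1) (u mod n1) = 0" using y0 by blast
    then show "v $ u = 0\<^sub>v (k*n1) $ u" using u by (simp add: y_def mult.commute)
  qed (use v in simp)
  with v(2) show False by simp
qed



lemma lincomb_carrier[simp]: "lincomb n1 n0 k c b \<in> carrier_mat n1 n0"
  by (simp add: lincomb_def)

lemma lincomb_index[simp]: "l < n1 \<Longrightarrow> j < n0 \<Longrightarrow> lincomb n1 n0 k c b $$ (l,j) = (\<Sum>r<k. c r * b r $$ (l,j))"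
  by (simp add: lincomb_def)

lemma lincomb_dim[simp]: "dim_row (lincomb n1 n0 k c b) = n1" "dim_col (lincomb n1 n0 k c b) = n0"
  by (simp_all add: lincomb_def)

lemma span_lincomb: "lincomb n1 n0 k c b \<in> span_mats n1 n0 k b"
  by (auto simp: span_mats_def)

lemma lincomb_add: "lincomb n1 n0 k c b + lincomb n1 n0 k c' b = lincomb n1 n0 k (\<lambda>r. c r + c' r) b"
  by (rule eq_matI) (auto simp: sum.distrib distrib_right)

lemma lincomb_smult: "t \<cdot>\<^sub>m lincomb n1 n0 k c b = lincomb n1 n0 k (\<lambda>r. t * c r) b"
  by (rule eq_matI) (auto simp: sum_distrib_left mult.assoc)

lemma fl_idx: "j < n0 \<Longrightarrow> fl n0 b s (l*n0+j) = b s $$ (l,j)"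
  by (simp add: fl_def)

lemma mult_idx: "A \<in> carrier_mat n2 n1 \<Longrightarrow> B \<in> carrier_mat n1 n0 \<Longrightarrow> i < n2 \<Longrightarrow> j < n0 \<Longrightarrow>
   (A * B) $$ (i,j) = (\<Sum>l<n1. A $$ (i,l) * B $$ (l,j))"
  by (auto simp: scalar_prod_def lessThan_atLeast0 intro!: sum.cong)

lemma sum3_swap: "(\<Sum>s\<in>A. \<Sum>s'\<in>B. \<Sum>r\<in>C. (f s s' r :: 'a::comm_monoid_add)) = (\<Sum>r\<in>C. \<Sum>s'\<in>B. \<Sum>s\<in>A. f s s' r)"
proof -
  have "(\<Sum>s\<in>A. \<Sum>s'\<in>B. \<Sum>r\<in>C. f s s' r) = (\<Sum>s\<in>A. \<Sum>r\<in>C. \<Sum>s'\<in>B. f s s' r)"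
    by (rule sum.cong[OF refl], rule sum.swap)
  also have "\<dots> = (\<Sum>r\<in>C. \<Sum>s\<in>A. \<Sum>s'\<in>B. f s s' r)" by (rule sum.swap)
  also have "\<dots> = (\<Sum>r\<in>C. \<Sum>s'\<in>B. \<Sum>s\<in>A. f s s' r)"
    by (rule sum.cong[OF refl], rule sum.swap)
  finally show ?thesis .
qed

lemma bst_symm:
  assumes basis: "is_basis n1 n0 k b E" and C: "C \<in> carrier_mat k k" and D: "D \<in> carrier_mat k k"
    and DC: "D * C = 1\<^sub>m k"
    and B: "bst n1 n0 k (\<lambda>r t. \<Sum>s<k. C $$ (r,s) * fl n0 b s t)"
  shows "symm_trivial E n2 n1"
  unfolding symm_trivial_def
proof (intro allI impI ballI)
  fix q a
  assume qa: "hom_on E n2 n1 q \<and> (\<forall>a\<in>E. \<forall>a'\<in>E. q a' * a = q a * a')" and aE: "a \<in> E"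
  have Ed: "E = span_mats n1 n0 k b" using basis by (simp add: is_basis_def)
  have qcar: "\<And>a. a \<in> E \<Longrightarrow> q a \<in> carrier_mat n2 n1"
    and qadd: "\<And>a a'. a \<in> E \<Longrightarrow> a' \<in> E \<Longrightarrow> q (a + a') = q a + q a'"
    and qsm: "\<And>t a. a \<in> E \<Longrightarrow> q (t \<cdot>\<^sub>m a) = t \<cdot>\<^sub>m q a"
    and sym: "\<And>a a'. a \<in> E \<Longrightarrow> a' \<in> E \<Longrightarrow> q a' * a = q a * a'"
    using qa unfolding hom_on_def by blast+
  have linE: "lincomb n1 n0 k c b \<in> E" for c unfolding Ed by (rule span_lincomb)
  define Nm where "Nm r = lincomb n1 n0 k (\<lambda>s. C $$ (r,s)) b" for r
  have NmE: "Nm r \<in> E" for r unfolding Nm_def by (rule linE)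
  have Nmc: "Nm r \<in> carrier_mat n1 n0" for r by (simp add: Nm_def)
  have Nmi: "Nm r $$ (l,j) = (\<Sum>s<k. C $$ (r,s) * fl n0 b s (l*n0+j))" if "l < n1" "j < n0" for r l j
    using that by (simp add: Nm_def fl_idx)
  have step1: "q (Nm r) = 0\<^sub>m n2 n1" if r: "r < k" for r
  proof (rule eq_matI)
    fix i l assume il: "i < dim_row (0\<^sub>m n2 n1)" "l < dim_col (0\<^sub>m n2 n1)"
    then have i: "i < n2" and l: "l < n1" by auto
    define y where "y r l = q (Nm r) $$ (i,l)" for r l
    have "\<forall>r<k. \<forall>s<k. \<forall>j<n0. (\<Sum>l<n1. y s l * (\<lambda>r t. \<Sum>s<k. C $$ (r,s) * fl n0 b s t) r (l*n0+j)) =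
            (\<Sum>l<n1. y r l * (\<lambda>r t. \<Sum>s<k. C $$ (r,s) * fl n0 b s t) s (l*n0+j))"
    proof (intro allI impI)
      fix r s j assume "r < k" "s < k" and j: "j < n0"
      have "(q (Nm s) * Nm r) $$ (i,j) = (q (Nm r) * Nm s) $$ (i,j)" using sym[OF NmE NmE] by simp
      then show "(\<Sum>l<n1. y s l * (\<lambda>r t. \<Sum>s<k. C $$ (r,s) * fl n0 b s t) r (l*n0+j)) =
            (\<Sum>l<n1. y r l * (\<lambda>r t. \<Sum>s<k. C $$ (r,s) * fl n0 b s t) s (l*n0+j))"
        using i j by (simp add: mult_idx[OF qcar[OF NmE] Nmc] Nmi y_def)
    qed
    with B have "\<forall>r<k. \<forall>l<n1. y r l = 0" unfolding bst_def by blast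
    then show "q (Nm r) $$ (i,l) = 0\<^sub>m n2 n1 $$ (i,l)" using r l i by (simp add: y_def)
  qed (use qcar[OF NmE] in auto)
  have q0: "q (0\<^sub>m n1 n0) = 0\<^sub>m n2 n1"
  proof -
    have z: "0\<^sub>m n1 n0 = lincomb n1 n0 k (\<lambda>_. 0) b" by (rule eq_matI) auto
    have zE: "0\<^sub>m n1 n0 \<in> E" unfolding z by (rule linE)
    have "q (0\<^sub>m n1 n0) = q (0 \<cdot>\<^sub>m 0\<^sub>m n1 n0)" by simp
    also have "\<dots> = 0 \<cdot>\<^sub>m q (0\<^sub>m n1 n0)" by (rule qsm[OF zE])
    also have "\<dots> = 0\<^sub>m n2 n1" using qcar[OF zE] by auto
    finally show ?thesis .
  qed
  have Nlin: "lincomb n1 n0 m e Nm = lincomb n1 n0 k (\<lambda>s'. \<Sum>s<m. e s * C $$ (s,s')) b" for m e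
  proof (rule eq_matI)
    fix l j assume "l < dim_row (lincomb n1 n0 k (\<lambda>s'. \<Sum>s<m. e s * C $$ (s,s')) b)"
       "j < dim_col (lincomb n1 n0 k (\<lambda>s'. \<Sum>s<m. e s * C $$ (s,s')) b)"
    then have lj: "l < n1" "j < n0" by auto
    have "(\<Sum>s<m. e s * Nm s $$ (l,j)) = (\<Sum>s<m. \<Sum>s'<k. e s * C $$ (s,s') * b s' $$ (l,j))"
      using lj by (simp add: Nm_def sum_distrib_left mult.assoc)
    also have "\<dots> = (\<Sum>s'<k. (\<Sum>s<m. e s * C $$ (s,s')) * b s' $$ (l,j))"
      by (subst sum.swap) (simp add: sum_distrib_right)
    finally show "lincomb n1 n0 m e Nm $$ (l,j) = lincomb n1 n0 k (\<lambda>s'. \<Sum>s<m. e s * C $$ (s,s')) b $$ (l,j)"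
      using lj by simp
  qed auto
  have step2: "m \<le> k \<Longrightarrow> q (lincomb n1 n0 m e Nm) = 0\<^sub>m n2 n1" for m e
  proof (induction m)
    case 0
    have "lincomb n1 n0 0 e Nm = 0\<^sub>m n1 n0" by (rule eq_matI) auto
    then show ?case using q0 by simp
  next
    case (Suc m)
    have split: "lincomb n1 n0 (Suc m) e Nm = lincomb n1 n0 m e Nm + e m \<cdot>\<^sub>m Nm m"
    proof -
      have dm: "dim_row (Nm m) = n1" "dim_col (Nm m) = n0" by (simp_all add: Nm_def)
      show ?thesis by (rule eq_matI) (use dm in auto)
    qed
    have E1: "lincomb n1 n0 m e Nm \<in> E" unfolding Nlin by (rule linE)
    have E2: "e m \<cdot>\<^sub>m Nm m \<in> E" unfolding Nm_def lincomb_smult by (rule linE)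
    have "q (lincomb n1 n0 (Suc m) e Nm) = q (lincomb n1 n0 m e Nm) + q (e m \<cdot>\<^sub>m Nm m)"
      unfolding split by (rule qadd[OF E1 E2])
    also have "q (e m \<cdot>\<^sub>m Nm m) = e m \<cdot>\<^sub>m q (Nm m)" by (rule qsm[OF NmE])
    also have "\<dots> = 0\<^sub>m n2 n1" using step1[of m] Suc.prems by auto
    finally show ?case using Suc by simp
  qed
  obtain c where ac: "a = lincomb n1 n0 k c b" using aE unfolding Ed span_mats_def by blast
  have DCe: "(\<Sum>s<k. D $$ (r,s) * C $$ (s,s')) = (if r = s' then 1 else 0)" if "r < k" "s' < k" for r s'
  proof -
    have "(D * C) $$ (r,s') = (\<Sum>s<k. D $$ (r,s) * C $$ (s,s'))"
      using that C D by (auto simp: scalar_prod_def lessThan_atLeast0 intro!: sum.cong)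
    then show ?thesis using DC that by simp
  qed
  define e where "e s = (\<Sum>r<k. c r * D $$ (r,s))" for s
  have "a = lincomb n1 n0 k e Nm"
  proof (rule eq_matI)
    fix l j assume "l < dim_row (lincomb n1 n0 k e Nm)" "j < dim_col (lincomb n1 n0 k e Nm)"
    then have lj: "l < n1" "j < n0" by auto
    have "(\<Sum>s<k. e s * Nm s $$ (l,j)) = (\<Sum>s<k. \<Sum>s'<k. \<Sum>r<k. c r * (D $$ (r,s) * C $$ (s,s')) * b s' $$ (l,j))"
      using lj by (simp add: Nm_def e_def sum_distrib_left sum_distrib_right mult_ac)
    also have "\<dots> = (\<Sum>r<k. \<Sum>s'<k. \<Sum>s<k. c r * (D $$ (r,s) * C $$ (s,s')) * b s' $$ (l,j))"
      by (rule sum3_swap)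
    also have "\<dots> = (\<Sum>r<k. \<Sum>s'<k. c r * (\<Sum>s<k. D $$ (r,s) * C $$ (s,s')) * b s' $$ (l,j))"
      by (simp add: sum_distrib_left sum_distrib_right)
    also have "\<dots> = (\<Sum>r<k. \<Sum>s'<k. c r * (if r = s' then 1 else 0) * b s' $$ (l,j))"
      by (rule sum.cong, simp, rule sum.cong, simp, simp add: DCe)
    also have "\<dots> = (\<Sum>r<k. c r * b r $$ (l,j))"
    proof (rule sum.cong[OF refl])
      fix r assume r: "r \<in> {..<k}"
      have "(\<Sum>s'<k. c r * (if r = s' then 1 else 0) * b s' $$ (l,j)) = (\<Sum>s'<k. if r = s' then c r * b s' $$ (l,j) else 0)"
        by (rule sum.cong) auto
      also have "\<dots> = c r * b r $$ (l,j)" using r by simp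
      finally show "(\<Sum>s'<k. c r * (if r = s' then 1 else 0) * b s' $$ (l,j)) = c r * b r $$ (l,j)" .
    qed
    finally show "a $$ (l,j) = lincomb n1 n0 k e Nm $$ (l,j)" using lj ac by simp
  qed (use ac in auto)
  then show "q a = 0\<^sub>m n2 n1" using step2[of k e] by simp
qed



lemma Gram_cong:
  assumes "\<And>r t. r < k \<Longrightarrow> t < n1*n0 \<Longrightarrow> N r t = N' r t"
  shows "Gram n0 n1 k N = Gram n0 n1 k N'"
proof -
  have M: "Mf n0 N e a l = Mf n0 N' e a l" if eE: "e \<in> Eset k n0" and l: "l < n1" for e a l
  proof -
    obtain r s j where e: "e = (r,s,j)" "r < k" "s < k" "j < n0" using Eset_mem[OF eE] by blast
    have "l*n0+j < n1*n0" using idx_lt[OF l e(4)] by simp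
    then show ?thesis using e assms by (simp add: Mf_def)
  qed
  show ?thesis unfolding Gram_def
  proof (rule eq_matI, simp_all, rule sum.cong[OF refl])
    fix i j e assume ij: "i < k*n1" "j < k*n1" and e: "e \<in> Eset k n0"
    then have "n1 > 0" by (cases n1) auto
    then show "Mf n0 N e (i div n1) (i mod n1) * Mf n0 N e (j div n1) (j mod n1) =
         Mf n0 N' e (i div n1) (i mod n1) * Mf n0 N' e (j div n1) (j mod n1)"
      using M[OF e] by simp
  qed
qed

lemma fpoly_symm:
  assumes S0: "S0 \<subseteq> {..<n1*n0}" "card S0 = k" and basis: "is_basis n1 n0 k b E"
    and f: "fpoly n0 n1 k S0 (plucker k n1 n0 b) \<noteq> 0"
  shows "symm_trivial E n2 n1"
proof -
  let ?A = "Amat n0 k S0 b"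
  have A: "?A \<in> carrier_mat k k" by (simp add: Amat_def)
  have dA: "det ?A \<noteq> 0" using f plucker_S0[OF S0] by (auto simp: fpoly_def)
  let ?N = "\<lambda>r t. \<Sum>s<k. adj_mat ?A $$ (r,s) * fl n0 b s t"
  have "Gram n0 n1 k (\<lambda>r t. coefN S0 r t (plucker k n1 n0 b)) = Gram n0 n1 k ?N"
    by (rule Gram_cong) (rule cramer_coef[OF S0])
  then have "det (Gram n0 n1 k ?N) \<noteq> 0" using f by (simp add: fpoly_def)
  then have B: "bst n1 n0 k ?N" by (rule gram_bst)
  define D where "D = (1 / det ?A) \<cdot>\<^sub>m ?A"
  have D: "D \<in> carrier_mat k k" using A by (simp add: D_def)
  have "D * adj_mat ?A = (1 / det ?A) \<cdot>\<^sub>m (?A * adj_mat ?A)"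
    unfolding D_def using A adj_mat(1)[OF A] by (simp add: mult_smult_assoc_mat)
  also have "\<dots> = 1\<^sub>m k" using adj_mat(2)[OF A] dA by (auto intro!: eq_matI)
  finally have DC: "D * adj_mat ?A = 1\<^sub>m k" .
  show ?thesis by (rule bst_symm[OF basis adj_mat(1)[OF A] D DC B])
qed



definition a1 :: "nat \<Rightarrow> nat \<Rightarrow> complex" where "a1 l j = (if l = j then 1 else 0)"
definition a2 :: "nat \<Rightarrow> nat \<Rightarrow> nat \<Rightarrow> complex" where
  "a2 n1 l j = (if l = j then of_nat l else 0) + (if l = n1 - 1 \<and> j = n1 then 1 else 0)"
definition a3 :: "nat \<Rightarrow> nat \<Rightarrow> nat \<Rightarrow> complex" where
  "a3 n1 l j = (if j = Suc l \<and> j < n1 then 1 else 0)"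

lemma s1: "(\<Sum>l<n1. z l * a1 l m) = (if m < n1 then z m else 0)"
proof -
  have "(\<Sum>l<n1. z l * a1 l m) = (\<Sum>l<n1. if l = m then z m else 0)"
    by (rule sum.cong) (auto simp: a1_def)
  then show ?thesis by simp
qed

lemma s2: assumes "1 \<le> n1" shows
  "(\<Sum>l<n1. z l * a2 n1 l m) = (if m < n1 then of_nat m * z m else 0) + (if m = n1 then z (n1 - 1) else 0)"
proof -
  have "(\<Sum>l<n1. z l * a2 n1 l m) = (\<Sum>l<n1. (if l = m then of_nat m * z m else 0) + (if l = n1 - 1 then (if m = n1 then z (n1 - 1) else 0) else 0))"
    by (rule sum.cong) (auto simp: a2_def algebra_simps)
  also have "\<dots> = (if m < n1 then of_nat m * z m else 0) + (if m = n1 then z (n1 - 1) else 0)"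
    using assms by (simp add: sum.distrib)
  finally show ?thesis .
qed

lemma s3: "(\<Sum>l<n1. z l * a3 n1 l m) = (if 1 \<le> m \<and> m < n1 then z (m - 1) else 0)"
proof -
  have "(\<Sum>l<n1. z l * a3 n1 l m) = (\<Sum>l<n1. if l = m - 1 then (if 1 \<le> m \<and> m < n1 then z (m - 1) else 0) else 0)"
    by (rule sum.cong) (auto simp: a3_def)
  then show ?thesis by auto
qed

lemma core:
  assumes n: "n1 < n0" "1 \<le> n1"
  and r21: "\<And>m. m < n0 \<Longrightarrow> (\<Sum>l<n1. z2 l * a1 l m) = (\<Sum>l<n1. z1 l * a2 n1 l m)"
  and r31: "\<And>m. m < n0 \<Longrightarrow> (\<Sum>l<n1. z3 l * a1 l m) = (\<Sum>l<n1. z1 l * a3 n1 l m)"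
  and r32: "\<And>m. m < n0 \<Longrightarrow> (\<Sum>l<n1. z3 l * a2 n1 l m) = (\<Sum>l<n1. z2 l * a3 n1 l m)"
  shows "\<And>l. l < n1 \<Longrightarrow> z1 l = 0"
proof -
  fix l assume l: "l < n1"
  have last: "z1 (n1 - 1) = 0" using r21[of n1] n by (simp add: s1 s2)
  have z2: "z2 m = of_nat m * z1 m" if "m < n1" for m using r21[of m] that n by (simp add: s1 s2)
  have z3: "z3 m = (if 1 \<le> m then z1 (m - 1) else 0)" if "m < n1" for m using r31[of m] that n by (simp add: s1 s3)
  show "z1 l = 0"
  proof (cases "l = n1 - 1")
    case True then show ?thesis using last by simp
  next
    case False
    then have l1: "Suc l < n1" using l by linarith
    have "of_nat (Suc l) * z3 (Suc l) = z2 l" using r32[of "Suc l"] l1 n by (simp add: s2 s3)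
    then have "of_nat (Suc l) * z1 l = of_nat l * z1 l" using z2[of l] z3[of "Suc l"] l1 by simp
    then show ?thesis by (simp add: algebra_simps)
  qed
qed

lemma sum3_swap': "(\<Sum>s\<in>A. \<Sum>s'\<in>B. \<Sum>r\<in>C. (f s s' r :: 'a::comm_monoid_add)) = (\<Sum>r\<in>C. \<Sum>s'\<in>B. \<Sum>s\<in>A. f s s' r)"
  by (rule sum3_swap)

lemma bilin_expand: "(\<Sum>l<n. (\<Sum>s<k. c' s * y s l) * (\<Sum>r<k. c r * X r l)) =
   (\<Sum>s<k. \<Sum>r<k. c' s * c r * (\<Sum>l<n. y s l * X r l :: complex))"
proof -
  have "(\<Sum>l<n. (\<Sum>s<k. c' s * y s l) * (\<Sum>r<k. c r * X r l)) = (\<Sum>l<n. \<Sum>s<k. \<Sum>r<k. c' s * c r * (y s l * X r l))"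
    by (simp add: sum_distrib_left sum_distrib_right mult_ac)
  also have "\<dots> = (\<Sum>r<k. \<Sum>s<k. \<Sum>l<n. c' s * c r * (y s l * X r l))" by (rule sum3_swap)
  also have "\<dots> = (\<Sum>s<k. \<Sum>r<k. \<Sum>l<n. c' s * c r * (y s l * X r l))" by (rule sum.swap)
  also have "\<dots> = (\<Sum>s<k. \<Sum>r<k. c' s * c r * (\<Sum>l<n. y s l * X r l))" by (simp add: sum_distrib_left)
  finally show ?thesis .
qed

lemma example_bst:
  assumes n: "n1 < n0" "1 \<le> n1"
  and c1: "\<And>l j. l < n1 \<Longrightarrow> j < n0 \<Longrightarrow> (\<Sum>r<k. c1 r * B r (l*n0+j)) = a1 l j"
  and c2: "\<And>l j. l < n1 \<Longrightarrow> j < n0 \<Longrightarrow> (\<Sum>r<k. c2 r * B r (l*n0+j)) = a2 n1 l j"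
  and c3: "\<And>l j. l < n1 \<Longrightarrow> j < n0 \<Longrightarrow> (\<Sum>r<k. c3 r * B r (l*n0+j)) = a3 n1 l j"
  shows "bst n1 n0 k B"
  unfolding bst_def
proof (intro allI impI)
  fix y r l
  assume C: "\<forall>r<k. \<forall>s<k. \<forall>j<n0. (\<Sum>l<n1. y s l * B r (l*n0+j)) = (\<Sum>l<n1. y r l * B s (l*n0+j))"
  assume rl: "r < k" "l < n1"
  define V where "V c l = (\<Sum>r<k. c r * y r l)" for c l
  have bil: "(\<Sum>l<n1. V c' l * (\<Sum>r<k. c r * B r (l*n0+m))) = (\<Sum>l<n1. V c l * (\<Sum>r<k. c' r * B r (l*n0+m)))"
    if m: "m < n0" for c c' m
  proof -
    have "(\<Sum>l<n1. V c' l * (\<Sum>r<k. c r * B r (l*n0+m))) =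
          (\<Sum>s<k. \<Sum>r<k. c' s * c r * (\<Sum>l<n1. y s l * B r (l*n0+m)))"
      unfolding V_def by (rule bilin_expand)
    also have "\<dots> = (\<Sum>s<k. \<Sum>r<k. c' s * c r * (\<Sum>l<n1. y r l * B s (l*n0+m)))"
      using C m by (auto intro!: sum.cong)
    also have "\<dots> = (\<Sum>r<k. \<Sum>s<k. c r * c' s * (\<Sum>l<n1. y r l * B s (l*n0+m)))"
      by (subst sum.swap) (simp add: mult_ac)
    also have "\<dots> = (\<Sum>l<n1. V c l * (\<Sum>r<k. c' r * B r (l*n0+m)))"
      unfolding V_def by (rule bilin_expand[symmetric])
    finally show ?thesis .
  qed
  have z1: "V c1 l = 0" if "l < n1" for l
  proof (rule core[OF n _ _ _ that])
    fix m assume m: "m < n0"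
    show "(\<Sum>l<n1. V c2 l * a1 l m) = (\<Sum>l<n1. V c1 l * a2 n1 l m)"
      using bil[OF m, of c1 c2] c1 c2 m by simp
    show "(\<Sum>l<n1. V c3 l * a1 l m) = (\<Sum>l<n1. V c1 l * a3 n1 l m)"
      using bil[OF m, of c1 c3] c1 c3 m by simp
    show "(\<Sum>l<n1. V c3 l * a2 n1 l m) = (\<Sum>l<n1. V c2 l * a3 n1 l m)"
      using bil[OF m, of c2 c3] c2 c3 m by simp
  qed
  define d where "d s = (if s = r then 1 else 0 :: complex)" for s
  have Vd: "V d l' = y r l'" for l'
  proof -
    have "V d l' = (\<Sum>r'<k. if r' = r then y r' l' else 0)"
      unfolding V_def by (rule sum.cong) (auto simp: d_def)
    then show ?thesis using rl by simp
  qed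
  have "l < n0" using rl n by simp
  then have "(\<Sum>l'<n1. V d l' * a1 l' l) = (\<Sum>l'<n1. V c1 l' * (\<Sum>r<k. d r * B r (l'*n0+l)))"
    using bil[of l c1 d] c1 by simp
  also have "\<dots> = 0" using z1 by simp
  finally show "y r l = 0" using rl by (simp add: s1 Vd)
qed



lemma sum_nth_eq:
  assumes "distinct xs"
  shows "(\<Sum>r<length xs. if xs ! r = p then g (xs ! r) else 0) = (if p \<in> set xs then g p else (0::complex))"
proof (cases "p \<in> set xs")
  case True
  then obtain i where i: "i < length xs" "xs ! i = p" by (auto simp: in_set_conv_nth)
  have "(\<Sum>r<length xs. if xs ! r = p then g (xs ! r) else 0) = (\<Sum>r<length xs. if r = i then g p else 0)"
    by (rule sum.cong) (use i assms in \<open>auto simp: nth_eq_iff_index_eq\<close>)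
  then show ?thesis using i True by simp
next
  case False
  then have "\<And>r. r < length xs \<Longrightarrow> xs ! r \<noteq> p" by auto
  then show ?thesis using False by simp
qed

lemma adj_one: "adj_mat (1\<^sub>m k :: complex mat) = 1\<^sub>m k"
proof -
  have c: "1\<^sub>m k \<in> carrier_mat k k" by simp
  have "adj_mat (1\<^sub>m k :: complex mat) = adj_mat (1\<^sub>m k) * 1\<^sub>m k"
    by (rule right_mult_one_mat[OF adj_mat(1)[OF c], symmetric])
  also have "\<dots> = (1::complex) \<cdot>\<^sub>m 1\<^sub>m k" using adj_mat(3)[OF c] by simp
  also have "\<dots> = 1\<^sub>m k" by (rule eq_matI) auto
  finally show ?thesis .
qed

lemma div_lt: "t < n1*n0 \<Longrightarrow> t div n0 < (n1::nat)"
  by (simp add: less_mult_imp_div_less)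

lemma example_gen:
  assumes S0: "S0 \<subseteq> {..<n1*n0}" "card S0 = k" and n: "n1 < n0" "1 \<le> n1"
  and bmc: "\<And>p. bm p \<in> carrier_mat n1 n0"
  and bmd: "\<And>p t. p \<in> S0 \<Longrightarrow> t \<in> S0 \<Longrightarrow> bm p $$ (t div n0, t mod n0) = (if p = t then 1 else 0)"
  and bmr: "\<And>p l j. l < n1 \<Longrightarrow> j < n0 \<Longrightarrow> cnj (bm p $$ (l,j)) = bm p $$ (l,j)"
  and bdef: "b = (\<lambda>r. bm (sorted_list_of_set S0 ! r))"
  and c1: "\<And>l j. l < n1 \<Longrightarrow> j < n0 \<Longrightarrow> (\<Sum>r<k. c1 r * b r $$ (l,j)) = a1 l j"
  and c2: "\<And>l j. l < n1 \<Longrightarrow> j < n0 \<Longrightarrow> (\<Sum>r<k. c2 r * b r $$ (l,j)) = a2 n1 l j"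
  and c3: "\<And>l j. l < n1 \<Longrightarrow> j < n0 \<Longrightarrow> (\<Sum>r<k. c3 r * b r $$ (l,j)) = a3 n1 l j"
  shows "is_basis n1 n0 k b (span_mats n1 n0 k b) \<and> fpoly n0 n1 k S0 (plucker k n1 n0 b) \<noteq> 0"
proof -
  let ?SL = "sorted_list_of_set S0"
  have fin: "finite S0" using S0 by (meson finite_lessThan finite_subset)
  have lenSL: "length ?SL = k" using S0 fin by simp
  have dSL: "distinct ?SL" by simp
  have inS0: "r < k \<Longrightarrow> ?SL ! r \<in> S0" for r using lenSL fin by (metis nth_mem set_sorted_list_of_set)
  have n0: "n0 > 0" using n by simp
  have bd: "fl n0 b s (?SL ! c) = (if s = c then 1 else 0)" if "s < k" "c < k" for s c
    using bmd[OF inS0[OF that(1)] inS0[OF that(2)]] that dSL lenSL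
    by (simp add: fl_def bdef nth_eq_iff_index_eq)
  have A1: "Amat n0 k S0 b = 1\<^sub>m k"
    by (rule eq_matI) (auto simp: Amat_def bd)
  have pl: "plucker k n1 n0 b S0 = 1" using plucker_S0[OF S0] A1 by simp
  have indep: "\<forall>r<k. c r = 0" if lc: "lincomb n1 n0 k c b = 0\<^sub>m n1 n0" for c
  proof (intro allI impI)
    fix r assume r: "r < k"
    let ?t = "?SL ! r"
    have t: "?t < n1*n0" using inS0[OF r] S0 by auto
    have l: "?t div n0 < n1" using div_lt[OF t] .
    have j: "?t mod n0 < n0" using n0 by simp
    have "0 = lincomb n1 n0 k c b $$ (?t div n0, ?t mod n0)" using lc l j by simp
    also have "\<dots> = (\<Sum>s<k. c s * fl n0 b s ?t)" using l j by (simp add: fl_def)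
    also have "\<dots> = (\<Sum>s<k. if s = r then c r else 0)" by (rule sum.cong) (auto simp: bd r)
    also have "\<dots> = c r" using r by simp
    finally show "c r = 0" by simp
  qed
  have basis: "is_basis n1 n0 k b (span_mats n1 n0 k b)"
    unfolding is_basis_def using indep bmc by (simp add: bdef)
  let ?N = "\<lambda>r t. if r < k \<and> t < n1*n0 then fl n0 b r t else 0"
  have G: "Gram n0 n1 k (\<lambda>r t. coefN S0 r t (plucker k n1 n0 b)) = Gram n0 n1 k ?N"
  proof (rule Gram_cong)
    fix r t assume rt: "r < k" "t < n1*n0"
    have "coefN S0 r t (plucker k n1 n0 b) = (\<Sum>s<k. adj_mat (Amat n0 k S0 b) $$ (r,s) * fl n0 b s t)"
      by (rule cramer_coef[OF S0 rt])
    also have "\<dots> = (\<Sum>s<k. if s = r then fl n0 b r t else 0)"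
      unfolding A1 adj_one by (rule sum.cong) (use rt in auto)
    also have "\<dots> = fl n0 b r t" using rt by simp
    finally show "coefN S0 r t (plucker k n1 n0 b) = ?N r t" using rt by simp
  qed
  have real: "cnj (?N r t) = ?N r t" for r t
    using bmr[OF div_lt[of t n1 n0]] n0 by (auto simp: fl_def bdef)
  have NB: "(\<Sum>r<k. c r * ?N r (l*n0+j)) = (\<Sum>r<k. c r * b r $$ (l,j))" if "l < n1" "j < n0" for c l j
    using idx_lt[OF that] that by (simp add: fl_idx)
  have c1': "\<And>l j. l < n1 \<Longrightarrow> j < n0 \<Longrightarrow> (\<Sum>r<k. c1 r * ?N r (l*n0+j)) = a1 l j"
    using NB c1 by simp
  have c2': "\<And>l j. l < n1 \<Longrightarrow> j < n0 \<Longrightarrow> (\<Sum>r<k. c2 r * ?N r (l*n0+j)) = a2 n1 l j"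
    using NB c2 by simp
  have c3': "\<And>l j. l < n1 \<Longrightarrow> j < n0 \<Longrightarrow> (\<Sum>r<k. c3 r * ?N r (l*n0+j)) = a3 n1 l j"
    using NB c3 by simp
  have "bst n1 n0 k ?N"
    by (rule example_bst[OF n c1' c2' c3'])
  then have "det (Gram n0 n1 k ?N) \<noteq> 0" by (rule bst_gram[OF real])
  then have "fpoly n0 n1 k S0 (plucker k n1 n0 b) \<noteq> 0" by (simp add: fpoly_def pl G)
  with basis show ?thesis by simp
qed



definition Wset :: "nat \<Rightarrow> nat \<Rightarrow> nat set" where
  "Wset n0 n1 = {t. t < n1*n0 \<and> (a1 (t div n0) (t mod n0) \<noteq> 0 \<or> a2 n1 (t div n0) (t mod n0) \<noteq> 0
      \<or> a3 n1 (t div n0) (t mod n0) \<noteq> 0)}"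

lemma W_sub: assumes "n1 < n0" "1 \<le> n1"
  shows "Wset n0 n1 \<subseteq> (\<lambda>l. l*n0+l) ` {..<n1} \<union> (\<lambda>l. l*n0+Suc l) ` {..<n1-1} \<union> {(n1-1)*n0+n1}"
proof
  fix t assume t: "t \<in> Wset n0 n1"
  define l where "l = t div n0"
  define j where "j = t mod n0"
  have tl: "t = l*n0+j" by (simp add: l_def j_def)
  have l: "l < n1" using t by (simp add: Wset_def l_def div_lt)
  have nz: "a1 l j \<noteq> 0 \<or> a2 n1 l j \<noteq> 0 \<or> a3 n1 l j \<noteq> 0" using t by (simp add: Wset_def l_def j_def)
  consider "l = j" | "l = n1 - 1 \<and> j = n1" | "j = Suc l \<and> j < n1"
    using nz unfolding a1_def a2_def a3_def by (auto split: if_splits)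
  then show "t \<in> (\<lambda>l. l*n0+l) ` {..<n1} \<union> (\<lambda>l. l*n0+Suc l) ` {..<n1-1} \<union> {(n1-1)*n0+n1}"
  proof cases
    case 1 then show ?thesis using l tl by auto
  next
    case 2 then show ?thesis using tl by auto
  next
    case 3 then have "l < n1 - 1" by linarith
    then show ?thesis using 3 tl by auto
  qed
qed

lemma W_card: assumes "n1 < n0" "1 \<le> n1" shows "card (Wset n0 n1) \<le> 2*n1"
proof -
  have "card (Wset n0 n1) \<le> card ((\<lambda>l. l*n0+l) ` {..<n1} \<union> (\<lambda>l. l*n0+Suc l) ` {..<n1-1} \<union> {(n1-1)*n0+n1})"
    by (rule card_mono[OF _ W_sub[OF assms]]) simp
  also have "\<dots> \<le> card ((\<lambda>l. l*n0+l) ` {..<n1}) + card ((\<lambda>l. l*n0+Suc l) ` {..<n1-1}) + card {(n1-1)*n0+n1}"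
    by (meson add_le_mono card_Un_le le_trans order_refl)
  also have "\<dots> \<le> n1 + (n1 - 1) + 1"
    using card_image_le[of "{..<n1}" "\<lambda>l. l*n0+l"] card_image_le[of "{..<n1-1}" "\<lambda>l. l*n0+Suc l"] by simp
  finally show ?thesis using assms by linarith
qed

lemma W_fin: "Wset n0 n1 \<subseteq> {..<n1*n0}" by (auto simp: Wset_def)

lemma notW: "t < n1*n0 \<Longrightarrow> t \<notin> Wset n0 n1 \<Longrightarrow>
  a1 (t div n0) (t mod n0) = 0 \<and> a2 n1 (t div n0) (t mod n0) = 0 \<and> a3 n1 (t div n0) (t mod n0) = 0"
  by (auto simp: Wset_def)

type_synonym ex_result = "nat set \<Rightarrow> (nat \<Rightarrow> complex mat) \<Rightarrow> bool"

lemma big_example: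
  assumes n: "n1 < n0" "1 \<le> n1" and k: "2*n1 \<le> k" "k \<le> n1*n0"
  shows "\<exists>S0 b. S0 \<subseteq> {..<n1*n0} \<and> card S0 = k \<and> is_basis n1 n0 k b (span_mats n1 n0 k b)
           \<and> fpoly n0 n1 k S0 (plucker k n1 n0 b) \<noteq> 0"
proof -
  let ?W = "Wset n0 n1"
  have cW: "card ?W \<le> k" using W_card[OF n] k by linarith
  have finW: "finite ?W" using W_fin by (meson finite_lessThan finite_subset)
  have "card ({..<n1*n0} - ?W) = n1*n0 - card ?W" using W_fin finW by (simp add: card_Diff_subset)
  then have "k - card ?W \<le> card ({..<n1*n0} - ?W)" using k by linarith
  then obtain T where T: "T \<subseteq> {..<n1*n0} - ?W" "card T = k - card ?W" "finite T"
    by (meson obtain_subset_with_card_n)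
  define S0 where "S0 = ?W \<union> T"
  have S0sub: "S0 \<subseteq> {..<n1*n0}" using T W_fin by (auto simp: S0_def)
  have cS0: "card S0 = k" unfolding S0_def using T finW cW by (subst card_Un_disjoint) auto
  define bm where "bm p = mat n1 n0 (\<lambda>(l,j). if l*n0+j = p then 1 else (0::complex))" for p
  define b where "b = (\<lambda>r. bm (sorted_list_of_set S0 ! r))"
  let ?SL = "sorted_list_of_set S0"
  have finS0: "finite S0" using S0sub by (meson finite_lessThan finite_subset)
  have lenSL: "length ?SL = k" using cS0 finS0 by simp
  have n0: "0 < n0" using n by simp
  have bmd: "bm p $$ (t div n0, t mod n0) = (if p = t then 1 else 0)" if "t \<in> S0" for p t
  proof -
    have "t < n1*n0" using that S0sub by auto
    then show ?thesis using n0 div_lt[of t n1 n0] by (auto simp: bm_def)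
  qed
  define cc where "cc g r = g ((?SL ! r) div n0) ((?SL ! r) mod n0)" for g :: "nat \<Rightarrow> nat \<Rightarrow> complex" and r
  have cgen: "(\<Sum>r<k. cc g r * b r $$ (l,j)) = g l j"
    if lj: "l < n1" "j < n0" and gz: "\<And>t. t < n1*n0 \<Longrightarrow> t \<notin> ?W \<Longrightarrow> g (t div n0) (t mod n0) = 0" for g l j
  proof -
    let ?t = "l*n0+j"
    have t: "?t < n1*n0" using idx_lt[OF lj] .
    have "(\<Sum>r<k. cc g r * b r $$ (l,j)) = (\<Sum>r<length ?SL. if ?SL ! r = ?t then (\<lambda>p. g (p div n0) (p mod n0)) (?SL ! r) else 0)"
      unfolding lenSL by (rule sum.cong) (use lj in \<open>auto simp: cc_def b_def bm_def\<close>)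
    also have "\<dots> = (if ?t \<in> S0 then g l j else 0)" using lj finS0 by (subst sum_nth_eq) auto
    also have "\<dots> = g l j"
    proof (cases "?t \<in> S0")
      case False
      then have "?t \<notin> ?W" by (auto simp: S0_def)
      then show ?thesis using gz[OF t] lj False by simp
    qed simp
    finally show ?thesis .
  qed
  have ex: "is_basis n1 n0 k b (span_mats n1 n0 k b) \<and> fpoly n0 n1 k S0 (plucker k n1 n0 b) \<noteq> 0"
  proof (rule example_gen[OF S0sub cS0 n, of bm b "cc a1" "cc (a2 n1)" "cc (a3 n1)"])
    show "\<And>p. bm p \<in> carrier_mat n1 n0" by (simp add: bm_def)
    show "\<And>p t. p \<in> S0 \<Longrightarrow> t \<in> S0 \<Longrightarrow> bm p $$ (t div n0, t mod n0) = (if p = t then 1 else 0)"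
      using bmd by blast
    show "\<And>p l j. l < n1 \<Longrightarrow> j < n0 \<Longrightarrow> cnj (bm p $$ (l, j)) = bm p $$ (l, j)" by (simp add: bm_def)
    show "b = (\<lambda>r. bm (sorted_list_of_set S0 ! r))" by (simp add: b_def)
    show "\<And>l j. l < n1 \<Longrightarrow> j < n0 \<Longrightarrow> (\<Sum>r<k. cc a1 r * b r $$ (l, j)) = a1 l j"
      by (rule cgen) (use notW in auto)
    show "\<And>l j. l < n1 \<Longrightarrow> j < n0 \<Longrightarrow> (\<Sum>r<k. cc (a2 n1) r * b r $$ (l, j)) = a2 n1 l j"
      by (rule cgen) (use notW in auto)
    show "\<And>l j. l < n1 \<Longrightarrow> j < n0 \<Longrightarrow> (\<Sum>r<k. cc (a3 n1) r * b r $$ (l, j)) = a3 n1 l j"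
      by (rule cgen) (use notW in auto)
  qed
  then show ?thesis using S0sub cS0 by blast
qed



lemma small_example:
  assumes n: "n1 < n0" "2 \<le> n1" and k: "3 \<le> k" "k < 2*n1"
  shows "\<exists>S0 b. S0 \<subseteq> {..<n1*n0} \<and> card S0 = k \<and> is_basis n1 n0 k b (span_mats n1 n0 k b)
           \<and> fpoly n0 n1 k S0 (plucker k n1 n0 b) \<noteq> 0"
proof -
  let ?W = "Wset n0 n1"
  define p2 where "p2 = (n1-1)*n0+n1"
  have n1': "1 \<le> n1" using n by simp
  have p2div: "p2 div n0 = n1 - 1" "p2 mod n0 = n1" using n by (simp_all add: p2_def)
  have "(n1-1)*n0 + n0 = n1*n0" using n by (cases n1) auto
  then have p2lt: "p2 < n1*n0" using n by (simp add: p2_def)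
  have one: "1 div n0 = 0" "1 mod n0 = 1" using n by auto
  have nn: "n1*(n1+1) \<le> n1*n0" using n by (intro mult_le_mono2) simp
  have "4*n1 \<le> n1*(n1+1) + 4"
  proof (cases "n1 \<ge> 3")
    case True then have "4*n1 \<le> n1*(n1+1)" by (simp add: mult_le_mono2 mult.commute)
    then show ?thesis by linarith
  next
    case False then have "n1 = 2" using n by linarith
    then show ?thesis by simp
  qed
  then have kle: "k - 3 \<le> n1*n0 - 2*n1" using nn k by linarith
  have p2ge_aux: "2 \<le> p2" using n by (simp add: p2_def)
  have W0: "0 \<in> ?W" "1 \<in> ?W" "p2 \<in> ?W"
    using n p2lt p2ge_aux by (auto simp: Wset_def a1_def a3_def a2_def one p2div)
  have cW: "card ?W \<le> 2*n1" using W_card[OF n(1) n1'] .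
  have finW: "finite ?W" using W_fin by (meson finite_lessThan finite_subset)
  have "card ({..<n1*n0} - ?W) = n1*n0 - card ?W" using W_fin finW by (simp add: card_Diff_subset)
  then have "k - 3 \<le> card ({..<n1*n0} - ?W)" using kle cW by linarith
  then obtain T where T: "T \<subseteq> {..<n1*n0} - ?W" "card T = k - 3" "finite T"
    by (meson obtain_subset_with_card_n)
  define S0 where "S0 = {0, 1, p2} \<union> T"
  have p2ge: "p2 \<ge> 2" using n by (simp add: p2_def)
  have S0sub: "S0 \<subseteq> {..<n1*n0}" using T W_fin[of n0 n1] W0 by (auto simp: S0_def)
  have c3: "card {0, 1, p2} = 3" using p2ge by auto
  have cS0: "card S0 = k" unfolding S0_def using T W0 c3 k by (subst card_Un_disjoint) auto
  define Am where "Am g = mat n1 n0 (\<lambda>(l,j). g l j)" for g :: "nat \<Rightarrow> nat \<Rightarrow> complex"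
  define bm where "bm p = (if p = 0 then Am a1 else if p = 1 then Am (a3 n1) else if p = p2 then Am (a2 n1)
      else mat n1 n0 (\<lambda>(l,j). if l*n0+j = p then 1 else (0::complex)))" for p
  define b where "b = (\<lambda>r. bm (sorted_list_of_set S0 ! r))"
  let ?SL = "sorted_list_of_set S0"
  have finS0: "finite S0" using S0sub by (meson finite_lessThan finite_subset)
  have lenSL: "length ?SL = k" using cS0 finS0 by simp
  have n0: "0 < n0" using n by simp
  have bmv: "bm p $$ (t div n0, t mod n0) = (if p = 0 then a1 (t div n0) (t mod n0) else if p = 1 then a3 n1 (t div n0) (t mod n0)
     else if p = p2 then a2 n1 (t div n0) (t mod n0) else if t = p then 1 else 0)" if "t < n1*n0" for p t
    using that n0 div_lt[OF that] by (simp add: bm_def Am_def)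
  have bmd: "bm p $$ (t div n0, t mod n0) = (if p = t then 1 else 0)" if pt: "p \<in> S0" "t \<in> S0" for p t
  proof -
    have t: "t < n1*n0" using pt S0sub by auto
    consider "t = 0" | "t = 1" | "t = p2" | "t \<in> T" using pt by (auto simp: S0_def)
    then show ?thesis
    proof cases
      case 1 then show ?thesis using pt n p2ge T W0 unfolding bmv[OF t]
        by (auto simp: a1_def a2_def a3_def S0_def)
    next
      case 2 then show ?thesis using pt n p2ge T W0 unfolding bmv[OF t]
        by (auto simp: a1_def a2_def a3_def S0_def one)
    next
      case 3 then show ?thesis using pt n p2ge T W0 unfolding bmv[OF t]
        by (auto simp: a1_def a2_def a3_def S0_def p2div)
    next
      case 4
      then have tW: "t \<notin> ?W" using T by auto
      then have z: "a1 (t div n0) (t mod n0) = 0" "a2 n1 (t div n0) (t mod n0) = 0" "a3 n1 (t div n0) (t mod n0) = 0"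
        using notW[OF t] by auto
      have "t \<noteq> 0" "t \<noteq> 1" "t \<noteq> p2" using tW W0 by metis+
      then show ?thesis unfolding bmv[OF t] z by auto
    qed
  qed
  define cc where "cc q r = (if ?SL ! r = q then 1 else (0::complex))" for q r
  have cgen: "(\<Sum>r<k. cc q r * b r $$ (l,j)) = bm q $$ (l,j)" if "q \<in> S0" for q l j
  proof -
    have "(\<Sum>r<k. cc q r * b r $$ (l,j)) = (\<Sum>r<length ?SL. if ?SL ! r = q then (\<lambda>p. bm p $$ (l,j)) (?SL ! r) else 0)"
      unfolding lenSL by (rule sum.cong) (auto simp: cc_def b_def)
    also have "\<dots> = bm q $$ (l,j)" using that finS0 by (subst sum_nth_eq) auto
    finally show ?thesis .
  qed
  have inS: "0 \<in> S0" "1 \<in> S0" "p2 \<in> S0" by (auto simp: S0_def)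
  have ex: "is_basis n1 n0 k b (span_mats n1 n0 k b) \<and> fpoly n0 n1 k S0 (plucker k n1 n0 b) \<noteq> 0"
  proof (rule example_gen[OF S0sub cS0 n(1) n1', of bm b "cc 0" "cc p2" "cc 1"])
    show "\<And>p. bm p \<in> carrier_mat n1 n0" by (simp add: bm_def Am_def)
    show "\<And>p t. p \<in> S0 \<Longrightarrow> t \<in> S0 \<Longrightarrow> bm p $$ (t div n0, t mod n0) = (if p = t then 1 else 0)"
      using bmd by blast
    show "\<And>p l j. l < n1 \<Longrightarrow> j < n0 \<Longrightarrow> cnj (bm p $$ (l, j)) = bm p $$ (l, j)"
      by (simp add: bm_def Am_def a1_def a2_def a3_def)
    show "b = (\<lambda>r. bm (sorted_list_of_set S0 ! r))" by (simp add: b_def)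
    show "\<And>l j. l < n1 \<Longrightarrow> j < n0 \<Longrightarrow> (\<Sum>r<k. cc 0 r * b r $$ (l, j)) = a1 l j"
      using cgen[OF inS(1)] by (simp add: bm_def Am_def)
    show "\<And>l j. l < n1 \<Longrightarrow> j < n0 \<Longrightarrow> (\<Sum>r<k. cc p2 r * b r $$ (l, j)) = a2 n1 l j"
      using cgen[OF inS(3)] p2ge by (simp add: bm_def Am_def)
    show "\<And>l j. l < n1 \<Longrightarrow> j < n0 \<Longrightarrow> (\<Sum>r<k. cc 1 r * b r $$ (l, j)) = a3 n1 l j"
      using cgen[OF inS(2)] by (simp add: bm_def Am_def)
  qed
  then show ?thesis using S0sub cS0 by blast
qed

lemma main_lemma:
  assumes n: "n1 < n0" "1 \<le> n1" and k: "2 \<le> k" "k \<le> n1*n0" "2 \<le> n1 \<longrightarrow> 3 \<le> k"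
  shows "\<exists>U. zariski_open_grass k n1 n0 U \<and> U \<noteq> {} \<and> (\<forall>E\<in>U. symm_trivial E n2 n1)"
proof -
  obtain S0 b where ex: "S0 \<subseteq> {..<n1*n0}" "card S0 = k" "is_basis n1 n0 k b (span_mats n1 n0 k b)"
    "fpoly n0 n1 k S0 (plucker k n1 n0 b) \<noteq> 0"
  proof (cases "2*n1 \<le> k")
    case True then show ?thesis using big_example[OF n True k(2)] that by blast
  next
    case False
    then have "2 \<le> n1" "k < 2*n1" using k n by auto
    then show ?thesis using small_example[OF n(1) _ _ , of k] k that by blast
  qed
  define P where "P = {fpoly n0 n1 k S | S. S \<subseteq> {..<n1*n0} \<and> card S = k}"
  define U where "U = {E \<in> grassmannian k n1 n0. \<exists>b f. is_basis n1 n0 k b E \<and> f \<in> P \<and> f (plucker k n1 n0 b) \<noteq> 0}"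
  have "zariski_open_grass k n1 n0 U"
    unfolding zariski_open_grass_def
    by (rule exI[of _ P]) (auto simp: P_def U_def homogeneous_fpoly)
  moreover have "span_mats n1 n0 k b \<in> U"
    using ex unfolding U_def P_def grassmannian_def by blast
  moreover have "\<forall>E\<in>U. symm_trivial E n2 n1"
  proof
    fix E assume "E \<in> U"
    then obtain b' S where "is_basis n1 n0 k b' E" "S \<subseteq> {..<n1*n0}" "card S = k"
      "fpoly n0 n1 k S (plucker k n1 n0 b') \<noteq> 0"
      unfolding U_def P_def by blast
    then show "symm_trivial E n2 n1" using fpoly_symm by blast
  qed
  ultimately show ?thesis by blast
qed

theorem mainTheorem3:
  fixes n0 n1 n2 :: nat
  assumes "n0 > n1" and "n1 \<ge> 1"
  shows "(n1 = 1 \<longrightarrow> (\<forall>k. 2 \<le> k \<and> k \<le> n1 * n0 \<longrightarrow>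
            (\<exists>U. zariski_open_grass k n1 n0 U \<and> U \<noteq> {} \<and>
                 (\<forall>E\<in>U. symm_trivial E n2 n1)))) \<and>
         (n1 > 1 \<longrightarrow> (\<forall>k. 3 \<le> k \<and> k \<le> n1 * n0 \<longrightarrow>
            (\<exists>U. zariski_open_grass k n1 n0 U \<and> U \<noteq> {} \<and>
                 (\<forall>E\<in>U. symm_trivial E n2 n1))))"
  using main_lemma[OF assms(1,2)] by auto


end
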